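(* Let $n\ge 2$, $m\ge 1$, let $V=\{v_1,\dots,v_m\}\subset H$ be data points, where $H=\{x\in\mathbb{R}^n : x_1+\cdots+x_n=0\}$ is identified with the tropical projective torus $\mathbb{R}^n/\mathbb{R}\mathbf{1}_n$. Let $w_1,\dots,w_m$ be any positive real weights. Then the weighted Fermat–Weber set $$\mathrm{FW}(V,w)=\operatorname{argmin}_{x\in H}\sum_{i=1}^m w_i\, d_\Delta(x,v_i)$$ is contained in the min-tropical convex hull $\mathrm{tconv}(V)$. More precisely, $\mathrm{FW}(V,w)$ is a covector cell of $\mathrm{tconv}(V)$. Furthermore, for every covector cell $P$ of $\mathrm{tconv}(V)$ there exist positive real weights $w_1,\dots,w_m$ such that $\mathrm{FW}(V,w)=P$.
   Context: $\mathbf{1}_n$ is the all-ones vector in $\mathbb{R}^n$; every class in $\mathbb{R}^n/\mathbb{R}\mathbf{1}_n$ has a unique representative in $H$, and points are given by these representatives. Write $v_i=(v_{i1},\dots,v_{in})$. The asymmetric tropical distance is, for $x,y\in H$, $d_\Delta(x,y)=n\max_{j\in[n]}(x_j-y_j)$ (for arbitrary representatives in $\mathbb{R}^n$ it is $n\max_j(x_j-y_j)+\sum_j(y_j-x_j)$). The min-tropical convex hull is $\mathrm{tconv}(V)=\{\min(\lambda_1\mathbf{1}_n+v_1,\dots,\lambda_m\mathbf{1}_n+v_m) : \lambda\in\mathbb{R}^m\}$ (coordinatewise minimum), taken modulo $\mathbb{R}\mathbf{1}_n$ and represented in $H$. Covector decomposition: for $x\in H$ and $i\in[m]$ let $S_i(x)=\{j\in[n]: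 x_j-v_{ij}=\max_{k}(x_k-v_{ik})\}$. For a tuple $S=(S_1,\dots,S_m)$ of nonempty subsets of $[n]$ put $C_S=\{x\in H : S_i\subseteq S_i(x)\text{ for all } i\}$. The nonempty sets $C_S$ are closed polyhedra forming a polyhedral complex (the covector decomposition of $H$ induced by $V$, i.e. the subdivision induced by the max-tropical hyperplanes centered at $v_1,\dots,v_m$); its cells are called covector cells. The covector cells of $\mathrm{tconv}(V)$ are the bounded covector cells; their union is $\mathrm{tconv}(V)$. *)

theory Defs
  imports "HOL-Analysis.Analysis"
begin

text \<open>Points of R^n are vectors real^'n (n = CARD('n)); data points are indexed by a
finite type 'm (m = CARD('m) \<ge> 1 automatically).\<close>

definition Hspace :: "(real^'n) set" where
  "Hspace = {x. (\<Sum>j\<in>UNIV. x $ j) = 0}"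

text \<open>Asymmetric tropical distance, for representatives in H.\<close>
definition dDelta :: "real^'n \<Rightarrow> real^'n \<Rightarrow> real" where
  "dDelta x y = real CARD('n) * Max (range (\<lambda>j. x $ j - y $ j))"

text \<open>Canonical representative in H of the class of y modulo R 1.\<close>
definition projH :: "real^'n \<Rightarrow> real^'n" where
  "projH y = (\<chi> j. y $ j - (\<Sum>k\<in>UNIV. y $ k) / real CARD('n))"

definition tconv :: "('m::finite \<Rightarrow> real^'n) \<Rightarrow> (real^'n) set" where
  "tconv v = {projH (\<chi> j. Min (range (\<lambda>i. lam i + v i $ j))) | lam. True}"

definition covec :: "('m \<Rightarrow> real^'n) \<Rightarrow> real^'n \<Rightarrow> 'm \<Rightarrow> 'n set" where
  "covec v x i = {j. x $ j - v i $ j = Max (range (\<lambda>k. x $ k - v i $ k))}"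

definition cellC :: "('m \<Rightarrow> real^'n) \<Rightarrow> ('m \<Rightarrow> 'n set) \<Rightarrow> (real^'n) set" where
  "cellC v S = {x \<in> Hspace. \<forall>i. S i \<subseteq> covec v x i}"

definition covector_cell :: "('m \<Rightarrow> real^'n) \<Rightarrow> (real^'n) set \<Rightarrow> bool" where
  "covector_cell v P \<longleftrightarrow> (\<exists>S. (\<forall>i. S i \<noteq> {}) \<and> P = cellC v S \<and> P \<noteq> {})"

text \<open>Covector cells of tconv(V): the bounded covector cells.\<close>
definition tconv_cell :: "('m \<Rightarrow> real^'n) \<Rightarrow> (real^'n) set \<Rightarrow> bool" where
  "tconv_cell v P \<longleftrightarrow> covector_cell v P \<and> bounded P"

definition FW :: "('m::finite \<Rightarrow> real^'n) \<Rightarrow> ('m \<Rightarrow> real) \<Rightarrow> (real^'n) set" where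
  "FW v w = {x \<in> Hspace. \<forall>y\<in>Hspace.
      (\<Sum>i\<in>UNIV. w i * dDelta x (v i)) \<le> (\<Sum>i\<in>UNIV. w i * dDelta y (v i))}"

end

theory Submission imports Defs begin

definition MM :: "('m \<Rightarrow> real^'n) \<Rightarrow> real^'n \<Rightarrow> 'm \<Rightarrow> real" where
  "MM v x i = Max (range (\<lambda>k. x $ k - v i $ k))"

lemma MM_ge: "x $ k - v i $ k \<le> MM v x i"
  unfolding MM_def by (rule Max_ge) auto

lemma MM_attained: "\<exists>k. x $ k - v i $ k = MM v x i"
proof -
  have "MM v x i \<in> range (\<lambda>k. x $ k - v i $ k)"
    unfolding MM_def by (rule Max_in) auto
  then show ?thesis by auto
qed

lemma covec_iff: "j \<in> covec v x i \<longleftrightarrow> x $ j - v i $ j = MM v x i"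
  unfolding covec_def MM_def by simp

lemma covec_iff2: "j \<in> covec v x i \<longleftrightarrow> (\<forall>k. x $ k - v i $ k \<le> x $ j - v i $ j)"
proof
  assume "j \<in> covec v x i"
  then have "x $ j - v i $ j = MM v x i" by (simp only: covec_iff)
  then show "\<forall>k. x $ k - v i $ k \<le> x $ j - v i $ j" using MM_ge[of x _ v i] by simp
next
  assume A: "\<forall>k. x $ k - v i $ k \<le> x $ j - v i $ j"
  obtain k where k: "x $ k - v i $ k = MM v x i" using MM_attained[of x v i] by auto
  have "x $ k - v i $ k \<le> x $ j - v i $ j" using A by simp
  moreover have "x $ j - v i $ j \<le> MM v x i" by (rule MM_ge)
  ultimately have "x $ j - v i $ j = MM v x i" using k by simp
  then show "j \<in> covec v x i" by (simp only: covec_iff)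
qed

lemma covec_ne: "covec v x i \<noteq> {}"
proof -
  obtain k where k: "x $ k - v i $ k = MM v x i" using MM_attained[of x v i] by auto
  then have "k \<in> covec v x i" by (simp only: covec_iff)
  then show ?thesis by auto
qed

lemma dDelta_MM: "dDelta (x::real^'n) (v i) = real CARD('n) * MM v x i"
  unfolding dDelta_def MM_def by simp

lemma Hspace_iff: "x \<in> Hspace \<longleftrightarrow> (\<Sum>j\<in>UNIV. x $ j) = 0"
  unfolding Hspace_def by simp

lemma ray_unbounded:
  fixes v :: "'m::finite \<Rightarrow> real^'n"
  assumes n2: "CARD('n) \<ge> 2" and x: "x \<in> cellC v T" and j: "\<And>i. j \<notin> T i"
  shows "\<not> bounded (cellC v T)"
proof
  assume "bounded (cellC v T)"
  then obtain B where B: "\<And>y. y \<in> cellC v T \<Longrightarrow> norm y \<le> B"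
    by (auto simp: bounded_iff)
  define N where "N = real CARD('n)"
  have N2: "N \<ge> 2" using n2 unfolding N_def by simp
  define z :: "real \<Rightarrow> real^'n" where "z s = (\<chi> k. x $ k - (if k = j then s else 0) + s / N)" for s :: real
  have xH: "x \<in> Hspace" and xc: "\<And>i. T i \<subseteq> covec v x i" using x unfolding cellC_def by auto
  have zc: "z s \<in> cellC v T" if s: "s \<ge> 0" for s
  proof -
    have "(\<Sum>k\<in>UNIV. z s $ k) = (\<Sum>k\<in>UNIV. x $ k) - (\<Sum>k\<in>UNIV. (if k = j then s else 0)) + (\<Sum>k\<in>(UNIV::'n set). s / N)"
      unfolding z_def by (simp add: sum.distrib sum_subtractf)
    also have "\<dots> = 0" using xH N2 unfolding Hspace_iff N_def by simp
    finally have "z s \<in> Hspace" unfolding Hspace_iff .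
    moreover have "T i \<subseteq> covec v (z s) i" for i
    proof
      fix l assume l: "l \<in> T i"
      then have lj: "l \<noteq> j" using j by auto
      have "l \<in> covec v x i" using l xc by blast
      then have lx: "\<forall>k. x $ k - v i $ k \<le> x $ l - v i $ l" unfolding covec_iff2 .
      show "l \<in> covec v (z s) i" unfolding covec_iff2
      proof
        fix k
        have "z s $ k \<le> x $ k + s / N" using s unfolding z_def by simp
        moreover have "z s $ l = x $ l + s / N" using lj unfolding z_def by simp
        ultimately show "z s $ k - v i $ k \<le> z s $ l - v i $ l"
          using lx[rule_format, of k] by linarith
      qed
    qed
    ultimately show ?thesis unfolding cellC_def by auto
  qed
  define a where "a = \<bar>x $ j\<bar>"
  have a0: "0 \<le> a" and xa: "x $ j \<le> a" unfolding a_def by auto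
  define s where "s = 2 * (B + a) + 2"
  have B0: "0 \<le> B" using B[OF x] norm_ge_zero[of x] by linarith
  have s2: "s / 2 = B + a + 1" unfolding s_def by simp
  have s0: "s \<ge> 0" using B0 a0 s2 by linarith
  have "\<bar>z s $ j\<bar> \<le> norm (z s)" by (rule component_le_norm_cart)
  also have "\<dots> \<le> B" using B[OF zc[OF s0]] .
  finally have A: "\<bar>z s $ j\<bar> \<le> B" .
  have "z s $ j = x $ j - s * (1 - 1 / N)" unfolding z_def by (simp add: algebra_simps)
  moreover have "s * (1 - 1/N) \<ge> s / 2"
  proof -
    have "1 - 1/N \<ge> 1/2" using N2 by (simp add: field_simps)
    then have "s * (1/2) \<le> s * (1 - 1/N)" using s0 by (rule mult_left_mono)
    then show ?thesis by simp
  qed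
  ultimately have "s / 2 \<le> x $ j - z s $ j" by linarith
  moreover have "- B \<le> z s $ j" using A by (simp add: abs_le_iff)
  ultimately show False using xa s2 by linarith
qed

lemma fsum_MM: "(\<Sum>i\<in>UNIV. w i * dDelta (y::real^'n) (v i)) = real CARD('n) * (\<Sum>i\<in>UNIV. w i * MM v y i)"
  by (simp add: dDelta_MM sum_distrib_left algebra_simps)

lemma part2:
  fixes v :: "'m::finite \<Rightarrow> real^'n"
  assumes n2: "CARD('n) \<ge> 2" and P: "tconv_cell v P"
  shows "\<exists>w. (\<forall>i. w i > 0) \<and> FW v w = P"
proof -
  obtain S where Sne: "\<And>i. S i \<noteq> {}" and PS: "P = cellC v S" and Pne: "P \<noteq> {}" and bP: "bounded P"
    using P unfolding tconv_cell_def covector_cell_def by blast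
  obtain x where x: "x \<in> cellC v S" using Pne PS by auto
  have cover: "\<exists>i. j \<in> S i" for j
  proof (rule ccontr)
    assume "\<not> (\<exists>i. j \<in> S i)"
    then have "\<And>i. j \<notin> S i" by auto
    then have "\<not> bounded (cellC v S)" by (rule ray_unbounded[OF n2 x])
    then show False using bP PS by simp
  qed
  define deg where "deg j = card {i. j \<in> S i}" for j
  have degpos: "deg j > 0" for j
    using cover[of j] unfolding deg_def by (auto simp: card_gt_0_iff)
  define p where "p i j = (if j \<in> S i then 1 / real (deg j) else 0)" for i j
  have p0: "p i j \<ge> 0" for i j unfolding p_def by auto
  have ppos: "j \<in> S i \<Longrightarrow> p i j > 0" for i j unfolding p_def using degpos[of j] by auto
  have colsum: "(\<Sum>i\<in>UNIV. p i j) = 1" for j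
  proof -
    have "(\<Sum>i\<in>UNIV. p i j) = (\<Sum>i\<in>{i. j \<in> S i}. 1 / real (deg j))"
      unfolding p_def by (simp add: sum.If_cases)
    also have "\<dots> = 1" using degpos[of j] cover[of j] unfolding deg_def by simp
    finally show ?thesis .
  qed
  define w where "w i = (\<Sum>j\<in>UNIV. p i j)" for i
  have wpos: "w i > 0" for i
  proof -
    obtain j where "j \<in> S i" using Sne[of i] by auto
    then have "0 < p i j" by (rule ppos)
    then show ?thesis unfolding w_def using p0 by (metis UNIV_I finite sum_pos2)
  qed
  define K where "K = - (\<Sum>i\<in>UNIV. \<Sum>j\<in>UNIV. p i j * v i $ j)"
  define D where "D y = (\<Sum>i\<in>UNIV. \<Sum>j\<in>UNIV. p i j * (MM v y i - (y $ j - v i $ j)))" for y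
  have Dge: "D y \<ge> 0" for y
    unfolding D_def by (intro sum_nonneg mult_nonneg_nonneg p0) (auto simp: MM_ge)
  have D0: "D y = 0 \<longleftrightarrow> (\<forall>i. S i \<subseteq> covec v y i)" for y
  proof -
    have "D y = 0 \<longleftrightarrow> (\<forall>i. \<forall>j. p i j * (MM v y i - (y $ j - v i $ j)) = 0)"
      unfolding D_def
      by (simp add: sum_nonneg_eq_0_iff sum_nonneg mult_nonneg_nonneg p0 MM_ge)
    also have "\<dots> \<longleftrightarrow> (\<forall>i. S i \<subseteq> covec v y i)"
    proof -
      have "p i j * (MM v y i - (y $ j - v i $ j)) = 0 \<longleftrightarrow> (j \<in> S i \<longrightarrow> j \<in> covec v y i)" for i j
        using ppos[of j i] unfolding covec_iff by (auto simp: p_def)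
      then show ?thesis by blast
    qed
    finally show ?thesis .
  qed
  have key: "(\<Sum>i\<in>UNIV. w i * MM v y i) = K + D y" if yH: "y \<in> Hspace" for y
  proof -
    have "D y = (\<Sum>i\<in>UNIV. \<Sum>j\<in>UNIV. p i j * MM v y i) - (\<Sum>i\<in>UNIV. \<Sum>j\<in>UNIV. p i j * y $ j)
        + (\<Sum>i\<in>UNIV. \<Sum>j\<in>UNIV. p i j * v i $ j)"
      unfolding D_def by (simp add: algebra_simps sum.distrib sum_subtractf)
    moreover have "(\<Sum>i\<in>UNIV. \<Sum>j\<in>UNIV. p i j * y $ j) = (\<Sum>j\<in>UNIV. (\<Sum>i\<in>UNIV. p i j) * y $ j)"
      by (subst sum.swap) (simp add: sum_distrib_right)
    moreover have "\<dots> = 0" using yH by (simp add: colsum Hspace_iff)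
    moreover have "(\<Sum>i\<in>UNIV. \<Sum>j\<in>UNIV. p i j * MM v y i) = (\<Sum>i\<in>UNIV. w i * MM v y i)"
      unfolding w_def by (simp add: sum_distrib_right)
    ultimately show ?thesis unfolding K_def by simp
  qed
  have "FW v w = P"
  proof
    show "FW v w \<subseteq> P"
    proof
      fix y assume y: "y \<in> FW v w"
      then have yH: "y \<in> Hspace" unfolding FW_def by auto
      have xH: "x \<in> Hspace" using x unfolding cellC_def by auto
      have "(\<Sum>i\<in>UNIV. w i * dDelta y (v i)) \<le> (\<Sum>i\<in>UNIV. w i * dDelta x (v i))"
        using y xH unfolding FW_def by blast
      then have "K + D y \<le> K + D x"
        by (simp only: fsum_MM key[OF yH] key[OF xH] mult_le_cancel_left_pos zero_less_card_finite of_nat_0_less_iff)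
      moreover have "D x = 0" using x D0 unfolding cellC_def by auto
      ultimately have "D y \<le> 0" by simp
      then have "D y = 0" using Dge[of y] by linarith
      then show "y \<in> P" unfolding PS cellC_def using D0 yH by auto
    qed
  next
    show "P \<subseteq> FW v w"
    proof
      fix y assume y: "y \<in> P"
      then have yH: "y \<in> Hspace" and "D y = 0" unfolding PS cellC_def using D0 by auto
      then show "y \<in> FW v w" unfolding FW_def
        by (auto simp: fsum_MM key Dge)
    qed
  qed
  then show ?thesis using wpos by blast
qed

definition gg :: "('m::finite \<Rightarrow> real^'n) \<Rightarrow> ('m \<Rightarrow> real) \<Rightarrow> real^'n \<Rightarrow> real" where
  "gg v w y = (\<Sum>i\<in>UNIV. w i * MM v y i)"

lemma FW_gg: "FW v w = {x \<in> Hspace. \<forall>y\<in>Hspace. gg v w x \<le> gg v w y}"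
  unfolding FW_def gg_def fsum_MM by (simp add: mult_le_cancel_left_pos)

lemma MM_lip: "MM v (x::real^'n) i \<le> MM v y i + norm (x - y)"
proof -
  obtain k where k: "x $ k - v i $ k = MM v x i" using MM_attained[of x v i] by auto
  have "x $ k - y $ k \<le> norm (x - y)"
    using component_le_norm_cart[of "x - y" k] by simp
  then show ?thesis using k MM_ge[of y k v i] by linarith
qed

lemma MM_cont: "continuous_on UNIV (\<lambda>x::real^'n. MM v x i)"
proof -
  have "1-lipschitz_on UNIV (\<lambda>x. MM v x i)"
  proof (rule lipschitz_onI)
    fix x y :: "real^'n"
    show "dist (MM v x i) (MM v y i) \<le> 1 * dist x y"
      using MM_lip[of v x i y] MM_lip[of v y i x] norm_minus_commute[of x y]
      by (simp add: dist_real_def dist_norm abs_le_iff)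
  qed simp
  then show ?thesis by (rule lipschitz_on_continuous_on)
qed

lemma gg_cont: "continuous_on UNIV (gg v w)"
  unfolding gg_def by (intro continuous_on_sum continuous_on_mult_left MM_cont)

lemma closed_Hspace: "closed Hspace"
  unfolding Hspace_def
  by (intro closed_Collect_eq continuous_on_sum continuous_on_component continuous_on_id continuous_on_const)

lemma Max_comp_ge0:
  fixes y :: "real^'n"
  assumes "y \<in> Hspace"
  shows "Max (range (\<lambda>k. y $ k)) \<ge> 0"
proof -
  let ?mx = "Max (range (\<lambda>k. y $ k))"
  have "(\<Sum>k\<in>UNIV. y $ k) \<le> (\<Sum>k\<in>(UNIV::'n set). ?mx)"
    by (intro sum_mono Max_ge) auto
  then have "0 \<le> real CARD('n) * ?mx" using assms by (simp add: Hspace_iff)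
  then show ?thesis by (simp add: zero_le_mult_iff)
qed

lemma norm_le_Max:
  fixes y :: "real^'n"
  assumes "y \<in> Hspace"
  shows "norm y \<le> 2 * real CARD('n) * Max (range (\<lambda>k. y $ k))"
proof -
  let ?mx = "Max (range (\<lambda>k. y $ k))"
  have m0: "?mx \<ge> 0" using Max_comp_ge0[OF assms] .
  have "norm y \<le> (\<Sum>k\<in>UNIV. \<bar>y $ k\<bar>)" by (rule norm_le_l1_cart)
  also have "\<dots> = (\<Sum>k\<in>UNIV. 2 * max (y $ k) 0 - y $ k)"
    by (intro sum.cong) auto
  also have "\<dots> = 2 * (\<Sum>k\<in>UNIV. max (y $ k) 0)"
    using assms by (simp add: sum_subtractf sum_distrib_left Hspace_iff)
  also have "\<dots> \<le> 2 * (\<Sum>k\<in>(UNIV::'n set). ?mx)"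
    using m0 by (intro mult_left_mono sum_mono) (auto intro: Max_ge)
  finally show ?thesis by simp
qed

lemma in_tconv:
  fixes v :: "'m::finite \<Rightarrow> real^'n"
  assumes xH: "x \<in> Hspace" and cov: "\<And>j. \<exists>i. j \<in> covec v x i"
  shows "x \<in> tconv v"
proof -
  have "(\<chi> j. Min (range (\<lambda>i. MM v x i + v i $ j))) = x"
  proof (rule vec_eq_iff[THEN iffD2], rule allI)
    fix j
    obtain i0 where i0: "j \<in> covec v x i0" using cov by blast
    have "Min (range (\<lambda>i. MM v x i + v i $ j)) = x $ j"
    proof (rule Min_eqI)
      show "finite (range (\<lambda>i. MM v x i + v i $ j))" by simp
      fix y assume "y \<in> range (\<lambda>i. MM v x i + v i $ j)"
      then obtain i where "y = MM v x i + v i $ j" by blast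
      then show "x $ j \<le> y" using MM_ge[of x j v i] by simp
    next
      have e: "x $ j = MM v x i0 + v i0 $ j" using i0 unfolding covec_iff by simp
      show "x $ j \<in> range (\<lambda>i. MM v x i + v i $ j)" using range_eqI[where f="\<lambda>i. MM v x i + v i $ j" and x=i0] e by simp
    qed
    then show "(\<chi> j. Min (range (\<lambda>i. MM v x i + v i $ j))) $ j = x $ j" by simp
  qed
  moreover have "projH x = x" using xH unfolding projH_def Hspace_iff by (simp add: vec_eq_iff)
  ultimately have "x = projH (\<chi> j. Min (range (\<lambda>i. MM v x i + v i $ j)))" by simp
  then show ?thesis unfolding tconv_def by blast
qed

context
  fixes v :: "'m::finite \<Rightarrow> real^'n" and w :: "'m \<Rightarrow> real"
  assumes wpos: "\<And>i. w i > 0"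
begin

definition "WW = (\<Sum>i\<in>UNIV. w i)"
definition "CC = (\<Sum>i\<in>UNIV. w i * norm (v i))"
definition "RR = 4 * real CARD('n) * CC / WW"

lemma WW_pos: "WW > 0"
  unfolding WW_def by (intro sum_pos) (auto simp: wpos)

lemma coercive:
  assumes yH: "y \<in> Hspace"
  shows "WW * norm y \<le> 2 * real CARD('n) * (gg v w y + CC)"
proof -
  let ?mx = "Max (range (\<lambda>k. y $ k))"
  have "?mx \<in> range (\<lambda>k. y $ k)" by (rule Max_in) auto
  then obtain k0 where k0: "y $ k0 = ?mx" by (metis rangeE)
  have "MM v y i \<ge> ?mx - norm (v i)" for i
    using MM_ge[of y k0 v i] component_le_norm_cart[of "v i" k0] k0 by (simp add: abs_le_iff)
  then have "gg v w y \<ge> (\<Sum>i\<in>UNIV. w i * (?mx - norm (v i)))"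
    unfolding gg_def by (intro sum_mono mult_left_mono) (auto simp: wpos less_imp_le)
  also have "(\<Sum>i\<in>UNIV. w i * (?mx - norm (v i))) = WW * ?mx - CC"
    unfolding WW_def CC_def by (simp add: algebra_simps sum_subtractf sum_distrib_right)
  finally have g: "gg v w y \<ge> WW * ?mx - CC" .
  have "WW * norm y \<le> WW * (2 * real CARD('n) * ?mx)"
    using norm_le_Max[OF yH] WW_pos by (simp add: mult_left_mono)
  also have "\<dots> = 2 * real CARD('n) * (WW * ?mx)" by simp
  also have "\<dots> \<le> 2 * real CARD('n) * (gg v w y + CC)"
    using g by (intro mult_left_mono) auto
  finally show ?thesis .
qed

lemma gg0: "gg v w 0 \<le> CC"
proof -
  have "MM v 0 i \<le> norm (v i)" for i
  proof -
    obtain k where k: "0 $ k - v i $ k = MM v 0 i" using MM_attained[of 0 v i] by auto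
    then show ?thesis using component_le_norm_cart[of "v i" k] by (simp add: abs_le_iff)
  qed
  then show ?thesis unfolding gg_def CC_def
    by (intro sum_mono mult_left_mono) (auto simp: wpos less_imp_le)
qed

lemma sublevel_bound:
  assumes "y \<in> Hspace" "gg v w y \<le> gg v w 0"
  shows "norm y \<le> RR"
proof -
  have "WW * norm y \<le> 2 * real CARD('n) * (2 * CC)"
  proof -
    have "gg v w y + CC \<le> 2 * CC" using assms(2) gg0 by linarith
    then have "2 * real CARD('n) * (gg v w y + CC) \<le> 2 * real CARD('n) * (2 * CC)"
      by (intro mult_left_mono) auto
    then show ?thesis using coercive[OF assms(1)] by linarith
  qed
  then show ?thesis unfolding RR_def using WW_pos by (simp add: field_simps)
qed

lemma zero_Hspace: "0 \<in> Hspace" unfolding Hspace_def by simp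

lemma FW_ne: "FW v w \<noteq> {}"
proof -
  let ?K = "Hspace \<inter> cball 0 RR"
  have "compact ?K" using closed_Hspace compact_cball by (rule closed_Int_compact)
  moreover have "0 \<in> ?K" using zero_Hspace sublevel_bound[OF zero_Hspace] by auto
  moreover have "continuous_on ?K (gg v w)"
    using gg_cont by (rule continuous_on_subset) simp
  ultimately have "\<exists>z\<in>?K. \<forall>y\<in>?K. gg v w z \<le> gg v w y"
    by (intro continuous_attains_inf) auto
  then obtain z where z: "z \<in> ?K" and zmin: "\<And>y. y \<in> ?K \<Longrightarrow> gg v w z \<le> gg v w y"
    by blast
  have "z \<in> FW v w" unfolding FW_gg
  proof (intro CollectI conjI ballI)
    show "z \<in> Hspace" using z by auto
    fix y :: "real^'n" assume yH: "y \<in> Hspace"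
    show "gg v w z \<le> gg v w y"
    proof (cases "gg v w y \<le> gg v w 0")
      case True then show ?thesis using zmin sublevel_bound yH by auto
    next
      case False
      have "gg v w z \<le> gg v w 0" using zmin \<open>0 \<in> ?K\<close> by blast
      then show ?thesis using False by linarith
    qed
  qed
  then show ?thesis by auto
qed

lemma FW_bounded: "bounded (FW v w)"
proof -
  have "FW v w \<subseteq> cball 0 RR"
    using sublevel_bound zero_Hspace unfolding FW_gg by auto
  then show ?thesis using bounded_cball bounded_subset by blast
qed

lemma gg_sum_split: "gg v w x = (\<Sum>i\<in>UNIV. w i * MM v x i)" unfolding gg_def ..

lemma FW_mid:
  assumes y: "y \<in> FW v w" and y': "y' \<in> FW v w"
  shows "(1/2) *\<^sub>R (y + y') \<in> FW v w \<and> (\<forall>i. covec v ((1/2) *\<^sub>R (y + y')) i = covec v y i \<inter> covec v y' i)"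
proof -
  define m where "m = (1/2) *\<^sub>R (y + y')"
  have yH: "y \<in> Hspace" and y'H: "y' \<in> Hspace" using y y' unfolding FW_gg by auto
  have mc: "m $ k = (y $ k + y' $ k) / 2" for k unfolding m_def by simp
  have mH: "m \<in> Hspace"
    using yH y'H unfolding Hspace_iff mc by (simp add: sum_divide_distrib[symmetric] sum.distrib)
  have Mle: "MM v m i \<le> (MM v y i + MM v y' i) / 2" for i
  proof -
    obtain k where k: "m $ k - v i $ k = MM v m i" using MM_attained[of m v i] by auto
    have "y $ k - v i $ k \<le> MM v y i" "y' $ k - v i $ k \<le> MM v y' i" by (rule MM_ge)+
    then show ?thesis using k unfolding mc by argo
  qed
  have fy: "\<forall>u\<in>Hspace. gg v w y \<le> gg v w u" using y unfolding FW_gg by blast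
  have fy': "\<forall>u\<in>Hspace. gg v w y' \<le> gg v w u" using y' unfolding FW_gg by blast
  have g1: "gg v w y \<le> gg v w y'" using fy y'H by blast
  have g2: "gg v w y' \<le> gg v w y" using fy' yH by blast
  have gym: "gg v w y \<le> gg v w m" using fy mH by blast
  have Seq: "(\<Sum>i\<in>UNIV. w i * ((MM v y i + MM v y' i) / 2 - MM v m i)) = (gg v w y + gg v w y') / 2 - gg v w m"
  proof -
    have "w i * ((MM v y i + MM v y' i) / 2 - MM v m i) = (w i * MM v y i) / 2 + (w i * MM v y' i) / 2 - w i * MM v m i" for i
      by (simp add: field_simps)
    then have "(\<Sum>i\<in>UNIV. w i * ((MM v y i + MM v y' i) / 2 - MM v m i))
      = (\<Sum>i\<in>UNIV. (w i * MM v y i) / 2 + (w i * MM v y' i) / 2 - w i * MM v m i)" by simp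
    also have "\<dots> = (\<Sum>i\<in>UNIV. w i * MM v y i) / 2 + (\<Sum>i\<in>UNIV. w i * MM v y' i) / 2 - (\<Sum>i\<in>UNIV. w i * MM v m i)"
      by (simp only: sum_subtractf sum.distrib sum_divide_distrib)
    finally show ?thesis unfolding gg_def by simp
  qed
  have nn: "\<forall>i\<in>UNIV. 0 \<le> w i * ((MM v y i + MM v y' i) / 2 - MM v m i)"
    using Mle wpos by (simp add: less_imp_le)
  have S0: "0 \<le> (\<Sum>i\<in>UNIV. w i * ((MM v y i + MM v y' i) / 2 - MM v m i))"
    using nn by (simp add: sum_nonneg)
  have gm: "gg v w m = gg v w y" using Seq S0 g1 g2 gym by argo
  have "(\<Sum>i\<in>UNIV. w i * ((MM v y i + MM v y' i) / 2 - MM v m i)) = 0"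
    using Seq gm g1 g2 by argo
  then have "\<forall>i\<in>UNIV. w i * ((MM v y i + MM v y' i) / 2 - MM v m i) = 0"
    using nn by (simp add: sum_nonneg_eq_0_iff)
  then have Meq: "MM v m i = (MM v y i + MM v y' i) / 2" for i
  proof -
    assume A: "\<forall>i\<in>UNIV. w i * ((MM v y i + MM v y' i) / 2 - MM v m i) = 0"
    then have "w i * ((MM v y i + MM v y' i) / 2 - MM v m i) = 0" by blast
    then have "(MM v y i + MM v y' i) / 2 - MM v m i = 0" using wpos[of i] by simp
    then show ?thesis by simp
  qed
  have cv: "covec v m i = covec v y i \<inter> covec v y' i" for i
  proof
    show "covec v m i \<subseteq> covec v y i \<inter> covec v y' i"
    proof
      fix l assume "l \<in> covec v m i"
      then have "m $ l - v i $ l = MM v m i" by (simp add: covec_iff)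
      moreover have "y $ l - v i $ l \<le> MM v y i" "y' $ l - v i $ l \<le> MM v y' i" by (rule MM_ge)+
      ultimately have "y $ l - v i $ l = MM v y i" "y' $ l - v i $ l = MM v y' i"
        unfolding Meq mc by argo+
      then show "l \<in> covec v y i \<inter> covec v y' i" by (simp add: covec_iff)
    qed
  next
    show "covec v y i \<inter> covec v y' i \<subseteq> covec v m i"
    proof
      fix l assume "l \<in> covec v y i \<inter> covec v y' i"
      then have "y $ l - v i $ l = MM v y i" "y' $ l - v i $ l = MM v y' i" by (simp_all add: covec_iff)
      then have "m $ l - v i $ l = MM v m i" unfolding Meq mc by argo
      then show "l \<in> covec v m i" by (simp add: covec_iff)
    qed
  qed
  have "\<forall>u\<in>Hspace. gg v w m \<le> gg v w u" using fy gm by simp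
  then have "m \<in> FW v w" using mH unfolding FW_gg by blast
  then show ?thesis using cv unfolding m_def by blast
qed

lemma FW_min_covec:
  obtains z where "z \<in> FW v w" "\<And>y i. y \<in> FW v w \<Longrightarrow> covec v z i \<subseteq> covec v y i"
proof -
  define mu where "mu x = (\<Sum>i\<in>UNIV. card (covec v x i))" for x
  obtain z0 where "z0 \<in> FW v w" using FW_ne by auto
  then obtain z where z: "z \<in> FW v w" and zmin: "\<And>y. y \<in> FW v w \<Longrightarrow> mu z \<le> mu y"
    using ex_has_least_nat[of "\<lambda>x. x \<in> FW v w" z0 mu] by blast
  have "covec v z i \<subseteq> covec v y i" if y: "y \<in> FW v w" for y i
  proof (rule ccontr)
    assume ns: "\<not> covec v z i \<subseteq> covec v y i"
    define m where "m = (1/2) *\<^sub>R (z + y)"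
    have mF: "m \<in> FW v w" and cm: "\<And>i. covec v m i = covec v z i \<inter> covec v y i"
      using FW_mid[OF z y] unfolding m_def by auto
    have "mu m < mu z" unfolding mu_def
    proof (rule sum_strict_mono_ex1)
      show "\<forall>x\<in>UNIV. card (covec v m x) \<le> card (covec v z x)"
        unfolding cm by (auto intro: card_mono)
      have "covec v m i \<subset> covec v z i" unfolding cm using ns by blast
      then show "\<exists>a\<in>UNIV. card (covec v m a) < card (covec v z a)"
        by (meson UNIV_I finite psubset_card_mono)
    qed simp
    then show False using zmin[OF mF] by simp
  qed
  then show ?thesis using that z by blast
qed

lemma cell_sub_FW:
  assumes z: "z \<in> FW v w" and y: "y \<in> cellC v (covec v z)"
  shows "y \<in> FW v w"
proof -
  define T where "T = covec v z"
  have zH: "z \<in> Hspace" using z unfolding FW_gg by auto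
  have yH: "y \<in> Hspace" and yT: "\<And>i. T i \<subseteq> covec v y i" using y unfolding cellC_def T_def by auto
  define zt :: "real \<Rightarrow> real^'n" where "zt t = z + t *\<^sub>R (z - y)" for t
  have ztc: "zt t $ k = z $ k + t * (z $ k - y $ k)" for t k unfolding zt_def by simp
  have ev: "eventually (\<lambda>t. \<forall>i. \<forall>l. l \<in> T i \<longrightarrow> (\<forall>k. zt t $ k - v i $ k \<le> zt t $ l - v i $ l)) (at_right (0::real))"
  proof (intro eventually_all_finite)
    fix i l
    show "eventually (\<lambda>t. l \<in> T i \<longrightarrow> (\<forall>k. zt t $ k - v i $ k \<le> zt t $ l - v i $ l)) (at_right (0::real))"
    proof (cases "l \<in> T i")
      case False then show ?thesis by simp
    next
      case lT: True
      have lz: "z $ l - v i $ l = MM v z i" using lT unfolding T_def by (simp add: covec_iff)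
      have ly: "y $ l - v i $ l = MM v y i" using lT yT[of i] by (auto simp: covec_iff)
      have "eventually (\<lambda>t. zt t $ k - v i $ k \<le> zt t $ l - v i $ l) (at_right (0::real))" for k
      proof (cases "k \<in> T i")
        case True
        have kz: "z $ k - v i $ k = MM v z i" using True unfolding T_def by (simp add: covec_iff)
        have ky: "y $ k - v i $ k = MM v y i" using True yT[of i] by (auto simp: covec_iff)
        have "zt t $ k - v i $ k = zt t $ l - v i $ l" for t
        proof -
          have "zt t $ k - v i $ k = (1 + t) * (z $ k - v i $ k) - t * (y $ k - v i $ k)"
            unfolding ztc by (simp add: algebra_simps)
          also have "\<dots> = (1 + t) * (z $ l - v i $ l) - t * (y $ l - v i $ l)"
            using kz ky lz ly by simp
          also have "\<dots> = zt t $ l - v i $ l" unfolding ztc by (simp add: algebra_simps)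
          finally show ?thesis .
        qed
        then show ?thesis by simp
      next
        case False
        have "z $ k - v i $ k \<noteq> MM v z i" using False unfolding T_def by (simp add: covec_iff)
        moreover have "z $ k - v i $ k \<le> MM v z i" by (rule MM_ge)
        ultimately have c0: "0 < (z $ l - v i $ l) - (z $ k - v i $ k)" using lz by linarith
        define c where "c = (z $ l - v i $ l) - (z $ k - v i $ k)"
        define d where "d = (z $ l - y $ l) - (z $ k - y $ k)"
        have "((\<lambda>t. c + t * d) \<longlongrightarrow> c + 0 * d) (at_right (0::real))"
          by (intro tendsto_intros)
        then have "((\<lambda>t. c + t * d) \<longlongrightarrow> c) (at_right (0::real))" by simp
        then have "eventually (\<lambda>t. 0 < c + t * d) (at_right (0::real))"
          using c0 unfolding c_def by (rule order_tendstoD(1))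
        then show ?thesis
        proof (rule eventually_mono)
          fix t :: real assume "0 < c + t * d"
          moreover have "zt t $ l - v i $ l - (zt t $ k - v i $ k) = c + t * d"
            unfolding ztc c_def d_def by (simp add: algebra_simps)
          ultimately show "zt t $ k - v i $ k \<le> zt t $ l - v i $ l" by linarith
        qed
      qed
      then have "eventually (\<lambda>t. \<forall>k. zt t $ k - v i $ k \<le> zt t $ l - v i $ l) (at_right (0::real))"
        by (rule eventually_all_finite)
      then show ?thesis by (rule eventually_mono) simp
    qed
  qed
  then obtain b where b0: "b > 0" and bP: "\<And>t. t > 0 \<Longrightarrow> t < b \<Longrightarrow> \<forall>i. \<forall>l. l \<in> T i \<longrightarrow> (\<forall>k. zt t $ k - v i $ k \<le> zt t $ l - v i $ l)"
    unfolding eventually_at_right_field by auto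
  define t where "t = b / 2"
  have t0: "t > 0" and tb: "t < b" unfolding t_def using b0 by auto
  have Tt: "l \<in> covec v (zt t) i" if "l \<in> T i" for i l
    using bP[OF t0 tb] that unfolding covec_iff2 by blast
  have ztH: "zt t \<in> Hspace"
    using zH yH unfolding Hspace_iff ztc by (simp add: sum.distrib sum_subtractf sum_distrib_left[symmetric])
  have Mt: "MM v (zt t) i = (1 + t) * MM v z i - t * MM v y i" for i
  proof -
    obtain l where l: "l \<in> T i" using covec_ne[of v z i] unfolding T_def by auto
    have "MM v (zt t) i = zt t $ l - v i $ l" using Tt[OF l] by (simp add: covec_iff)
    also have "\<dots> = (1 + t) * (z $ l - v i $ l) - t * (y $ l - v i $ l)"
      unfolding ztc by (simp add: algebra_simps)
    also have "\<dots> = (1 + t) * MM v z i - t * MM v y i"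
      using l yT[of i] unfolding T_def by (auto simp: covec_iff)
    finally show ?thesis .
  qed
  have "gg v w (zt t) = (1 + t) * gg v w z - t * gg v w y"
  proof -
    have "gg v w (zt t) = (\<Sum>i\<in>UNIV. (1 + t) * (w i * MM v z i) - t * (w i * MM v y i))"
      unfolding gg_def Mt by (simp add: algebra_simps)
    also have "\<dots> = (1 + t) * gg v w z - t * gg v w y"
      unfolding gg_def by (simp only: sum_subtractf sum_distrib_left)
    finally show ?thesis .
  qed
  moreover have "gg v w z \<le> gg v w (zt t)" using z ztH unfolding FW_gg by auto
  ultimately have "t * gg v w y \<le> t * gg v w z" by (simp add: algebra_simps)
  then have gyz: "gg v w y \<le> gg v w z" using t0 by simp
  show ?thesis using yH gyz z unfolding FW_gg by (auto intro: order_trans)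
qed

lemma part1:
  assumes n2: "CARD('n) \<ge> 2"
  shows "FW v w \<subseteq> tconv v \<and> tconv_cell v (FW v w)"
proof -
  obtain z where z: "z \<in> FW v w" and zmin: "\<And>y i. y \<in> FW v w \<Longrightarrow> covec v z i \<subseteq> covec v y i"
    using FW_min_covec by blast
  have eq: "FW v w = cellC v (covec v z)"
  proof
    show "FW v w \<subseteq> cellC v (covec v z)"
      using zmin unfolding cellC_def FW_gg by auto
    show "cellC v (covec v z) \<subseteq> FW v w"
      using cell_sub_FW[OF z] by blast
  qed
  have cell: "tconv_cell v (FW v w)"
    unfolding tconv_cell_def covector_cell_def
    using eq covec_ne[of v z] FW_ne FW_bounded by blast
  have cover: "\<exists>i. j \<in> covec v z i" for j
  proof (rule ccontr)
    assume "\<not> (\<exists>i. j \<in> covec v z i)"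
    then have "\<And>i. j \<notin> covec v z i" by auto
    moreover have "z \<in> cellC v (covec v z)" using z eq by simp
    ultimately have "\<not> bounded (cellC v (covec v z))" using ray_unbounded[OF n2] by blast
    then show False using FW_bounded eq by simp
  qed
  have "FW v w \<subseteq> tconv v"
  proof
    fix x assume x: "x \<in> FW v w"
    then have xH: "x \<in> Hspace" unfolding FW_gg by auto
    have "\<exists>i. j \<in> covec v x i" for j using cover[of j] zmin[OF x] by blast
    then show "x \<in> tconv v" using in_tconv[OF xH] by blast
  qed
  then show ?thesis using cell by blast
qed

end

theorem theorem1p1:
  fixes v :: "'m::finite \<Rightarrow> real^'n"
  assumes "CARD('n) \<ge> 2"
    and "\<And>i. v i \<in> Hspace"
  shows "(\<forall>w. (\<forall>i. w i > 0) \<longrightarrow> FW v w \<subseteq> tconv v \<and> tconv_cell v (FW v w))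
       \<and> (\<forall>P. tconv_cell v P \<longrightarrow> (\<exists>w. (\<forall>i. w i > 0) \<and> FW v w = P))"
  using part1[OF _ assms(1)] part2[OF assms(1)] by blast

end
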